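(* Let $q>1$ be a fixed integer and $c>0$. There exists a constant $C>0$ (depending only on $q$ and $c$) such that for all $n\in\mathbb{N}$ and $p\in(0,1)$ with $np\ge c$ (i.e. $p^{-1}\lesssim n$), a random variable $B\sim\mathrm{Bin}(n,p)$ satisfies $$\mathbb{E}\Big[\mathbb{I}\{B>0\}\Big(\frac1B-\frac1{np}\Big)^q\Big]\le C\,(np)^{-3q/2}.$$ *)

theory Defs
  imports "HOL-Probability.Probability"
begin

end

theory Submission
  imports Defs
begin

definition mom :: "nat \<Rightarrow> nat \<Rightarrow> real \<Rightarrow> real" where
  "mom j n p = measure_pmf.expectation (binomial_pmf n p) (\<lambda>k. (real k - real n * p)^j)"

lemma fin_bin: "p \<in> {0..1} \<Longrightarrow> finite (set_pmf (binomial_pmf n p))"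
  by (auto simp: set_pmf_binomial_eq)

lemma mom_Suc:
  assumes p: "p \<in> {0..1}"
  shows "mom j (Suc n) p = (\<Sum>i\<le>j. real (j choose i) * mom i n p * (p*(1-p)^(j-i) + (1-p)*(-p)^(j-i)))"
proof -
  have "mom j (Suc n) p = (\<Sum>b\<in>UNIV. pmf (bernoulli_pmf p) b *\<^sub>R
      measure_pmf.expectation (binomial_pmf n p \<bind> (\<lambda>k. return_pmf ((if b then 1 else 0) + k)))
       (\<lambda>k. (real k - real (Suc n) * p)^j))"
    unfolding mom_def binomial_pmf_Suc[OF p]
    by (rule pmf_expectation_bind) (auto simp: map_pmf_def[symmetric] fin_bin[OF p])
  also have "\<dots> = p * measure_pmf.expectation (binomial_pmf n p) (\<lambda>k. ((real k - real n * p) + (1-p))^j)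
     + (1-p) * measure_pmf.expectation (binomial_pmf n p) (\<lambda>k. ((real k - real n * p) + (-p))^j)"
    using p by (simp add: UNIV_bool map_pmf_def[symmetric] algebra_simps)
  also have "\<dots> = (\<Sum>i\<le>j. real (j choose i) * mom i n p * (p*(1-p)^(j-i) + (1-p)*(-p)^(j-i)))"
    unfolding binomial_ring mom_def
    using p by (simp add: integral_sum integral_mult_right_zero sum_distrib_left sum.distrib[symmetric] algebra_simps)
  finally show ?thesis .
qed


lemma e_bound:
  assumes p: "p \<in> {0..1::real}" and r: "r \<ge> 1"
  shows "\<bar>p*(1-p)^r + (1-p)*(-p)^r\<bar> \<le> 2*p"
proof -
  have a: "(1-p)^r \<le> 1" using p by (simp add: power_le_one)
  have pr: "p^r \<le> p^1" by (rule power_decreasing) (use p r in auto)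
  have b: "\<bar>(-p)^r\<bar> \<le> p" using p pr by (simp add: power_abs)
  have "\<bar>p*(1-p)^r + (1-p)*(-p)^r\<bar> \<le> \<bar>p*(1-p)^r\<bar> + \<bar>(1-p)*(-p)^r\<bar>"
    by (rule abs_triangle_ineq)
  also have "\<dots> = p*(1-p)^r + (1-p)*\<bar>(-p)^r\<bar>" using p by (simp add: abs_mult)
  also have "p*(1-p)^r \<le> p" by (rule mult_left_le) (use p a in auto)
  also have "(1-p)*\<bar>(-p)^r\<bar> \<le> \<bar>(-p)^r\<bar>" by (rule mult_left_le_one_le) (use p in auto)
  also note b
  finally show ?thesis by simp
qed

lemma mom_zero: "p \<in> {0..1} \<Longrightarrow> mom 0 n p = 1"
  by (simp add: mom_def)

lemma mom_n0: "p \<in> {0..1} \<Longrightarrow> mom j 0 p = (if j = 0 then 1 else 0)"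
  by (simp add: mom_def binomial_pmf_0)

lemma mom_bound: "\<exists>C. \<forall>n p. p \<in> {0..1} \<longrightarrow> \<bar>mom j n p\<bar> \<le> C * (1 + real n * p)^(j div 2)"
proof (induction j rule: less_induct)
  case (less j)
  then have "\<forall>i. \<exists>C. i < j \<longrightarrow> (\<forall>n p. p \<in> {0..1} \<longrightarrow> \<bar>mom i n p\<bar> \<le> C * (1 + real n * p)^(i div 2))"
    by blast
  then obtain Cf where Cf: "\<And>i n p. i < j \<Longrightarrow> p \<in> {0..1} \<Longrightarrow> \<bar>mom i n p\<bar> \<le> Cf i * (1 + real n * p)^(i div 2)"
    by metis
  show ?case
  proof (cases j)
    case 0
    then show ?thesis by (intro exI[of _ 1]) (auto simp: mom_zero)
  next
    case (Suc m)
    define K where "K = 2 * (\<Sum>i<m. real (j choose i) * \<bar>Cf i\<bar>)"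
    have K0: "K \<ge> 0" unfolding K_def by (auto intro!: sum_nonneg)
    have claim: "\<bar>mom j n p\<bar> \<le> real n * p * K * (1 + real N * p)^(j div 2 - 1)"
      if p: "p \<in> {0..1}" and nN: "n \<le> N" for n N p
      using nN
    proof (induction n)
      case 0
      then show ?case using Suc by (simp add: mom_n0[OF p])
    next
      case (Suc n)
      define B where "B = (1 + real N * p)^(j div 2 - 1)"
      have B1: "B \<ge> 1" unfolding B_def using p by (auto intro!: one_le_power)
      define T where "T = (\<lambda>i. real (j choose i) * mom i n p * (p*(1-p)^(j-i) + (1-p)*(-p)^(j-i)))"
      have split: "mom j (Suc n) p = (\<Sum>i<m. T i) + T m + T j"
        unfolding mom_Suc[OF p] T_def[symmetric] using \<open>j = Suc m\<close>
        by (simp add: lessThan_Suc_atMost[symmetric])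
      have Tm: "T m = 0" unfolding T_def using \<open>j = Suc m\<close> by simp
      have Tj: "T j = mom j n p" unfolding T_def by simp
      have Ti: "\<bar>T i\<bar> \<le> real (j choose i) * \<bar>Cf i\<bar> * B * (2 * p)" if "i < m" for i
      proof -
        have "\<bar>mom i n p\<bar> \<le> Cf i * (1 + real n * p)^(i div 2)"
          using Cf[where i=i and n=n and p=p] that \<open>j = Suc m\<close> p by simp
        also have "\<dots> \<le> \<bar>Cf i\<bar> * B"
        proof (intro mult_mono)
          have "(1 + real n * p)^(i div 2) \<le> (1 + real N * p)^(i div 2)"
            using p Suc.prems by (intro power_mono) (auto intro!: mult_right_mono)
          also have "\<dots> \<le> B" unfolding B_def
            using p that \<open>j = Suc m\<close> by (intro power_increasing) auto
          finally show "(1 + real n * p)^(i div 2) \<le> B" .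
        qed (use p in auto)
        finally have m: "\<bar>mom i n p\<bar> \<le> \<bar>Cf i\<bar> * B" .
        have e: "\<bar>p*(1-p)^(j-i) + (1-p)*(-p)^(j-i)\<bar> \<le> 2 * p"
          using e_bound[OF p, of "j-i"] that \<open>j = Suc m\<close> by simp
        have "\<bar>T i\<bar> = real (j choose i) * \<bar>mom i n p\<bar> * \<bar>p*(1-p)^(j-i) + (1-p)*(-p)^(j-i)\<bar>"
          unfolding T_def by (simp add: abs_mult)
        also have "\<dots> \<le> real (j choose i) * (\<bar>Cf i\<bar> * B) * (2 * p)"
          using m e by (intro mult_mono) auto
        finally show ?thesis by simp
      qed
      have "\<bar>mom j (Suc n) p\<bar> \<le> (\<Sum>i<m. \<bar>T i\<bar>) + \<bar>mom j n p\<bar>"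
        unfolding split Tm Tj by (auto intro!: order.trans[OF abs_triangle_ineq] sum_abs)
      also have "\<dots> \<le> (\<Sum>i<m. real (j choose i) * \<bar>Cf i\<bar> * B * (2 * p)) + real n * p * K * B"
        using Suc.IH Suc.prems Ti unfolding B_def by (intro add_mono sum_mono) auto
      also have "(\<Sum>i<m. real (j choose i) * \<bar>Cf i\<bar> * B * (2 * p)) = p * K * B"
        unfolding K_def by (simp add: sum_distrib_left sum_distrib_right algebra_simps)
      finally show ?case unfolding B_def by (simp add: algebra_simps)
    qed
    show ?thesis
    proof (intro exI[of _ K] allI impI)
      fix n p assume p: "(p::real) \<in> {0..1}"
      have "\<bar>mom j n p\<bar> \<le> real n * p * K * (1 + real n * p)^(j div 2 - 1)"
        using claim[OF p order.refl] .
      also have "\<dots> \<le> K * (1 + real n * p)^(j div 2)"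
      proof (cases "j div 2")
        case 0
        then have "m = 0" using \<open>j = Suc m\<close> by simp
        then have "K = 0" unfolding K_def by simp
        then show ?thesis by simp
      next
        case (Suc d)
        have "real n * p * K * (1 + real n * p)^d \<le> (1 + real n * p) * K * (1 + real n * p)^d"
          using p K0 by (intro mult_right_mono) auto
        then show ?thesis using Suc by (simp add: algebra_simps)
      qed
      finally show "\<bar>mom j n p\<bar> \<le> K * (1 + real n * p)^(j div 2)" .
    qed
  qed
qed


lemma pointwise:
  fixes x mu s c K :: real and q :: nat
  assumes c: "c > 0" and muc: "mu \<ge> c" and s: "s = sqrt mu" and K: "K = max 1 (1/c)"
    and x: "x = real k"
  shows "(if k > 0 then (1 / x - 1 / mu) ^ q else 0)
     \<le> 2^q / s^(3*q) + 2^q * \<bar>x - mu\<bar>^(2*q) / s^(5*q) + K^q * 16^q * \<bar>x - mu\<bar>^(4*q) / s^(8*q)"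
    (is "?f \<le> ?A + ?B + ?D")
proof -
  have mu0: "mu > 0" using c muc by simp
  have s0: "s > 0" using s mu0 by simp
  have mus: "mu = s^2" using s mu0 by simp
  define d where "d = \<bar>x - mu\<bar>"
  have d0: "d \<ge> 0" unfolding d_def by simp
  have A0: "?A \<ge> 0" and B0: "?B \<ge> 0" and D0: "?D \<ge> 0"
  proof -
    have K0: "K \<ge> 0" unfolding K by simp
    show "?A \<ge> 0" using s0 by simp
    show "?B \<ge> 0" using s0 by simp
    show "?D \<ge> 0" using s0 K0 by simp
  qed
  show ?thesis
  proof (cases "k > 0")
    case False
    then show ?thesis using A0 B0 D0 by simp
  next
    case True
    have x1: "x \<ge> 1" using True x by simp
    have f: "?f \<le> \<bar>1 / x - 1 / mu\<bar> ^ q"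
      using True by (simp add: power_abs[symmetric])
    show ?thesis
    proof (cases "x \<ge> mu / 2")
      case big: True
      have e: "\<bar>1 / x - 1 / mu\<bar> = d / (x * mu)"
        unfolding d_def using x1 mu0 by (simp add: field_simps abs_div abs_minus_commute)
      have s4: "s^4 = mu * mu" unfolding mus by (simp add: power4_eq_xxxx power2_eq_square)
      have "mu / 2 * mu \<le> x * mu" using big mu0 by (intro mult_right_mono) auto
      then have xm: "s^4 / 2 \<le> x * mu" unfolding s4 by simp
      have "d / (x * mu) \<le> d / (s^4 / 2)"
        by (rule divide_left_mono[OF xm d0]) (use s0 x1 mu0 in simp)
      then have e2: "\<bar>1 / x - 1 / mu\<bar> \<le> 2 * d / s^4"
        unfolding e by (simp add: ac_simps)
      have "?f \<le> (2 * d / s^4) ^ q"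
        using f e2 by (meson abs_ge_zero order.trans power_mono)
      also have "\<dots> = 2^q * d^q / s^(4*q)" by (simp add: power_divide power_mult_distrib power_mult)
      also have "\<dots> \<le> ?A + ?B"
      proof (cases "d \<le> s")
        case True
        have "d^q \<le> s^q" using True d0 by (simp add: power_mono)
        then have "2^q * d^q / s^(4*q) \<le> 2^q * s^q / s^(4*q)"
          using s0 by (simp add: divide_right_mono)
        also have "\<dots> = ?A"
        proof -
          have "s^(4*q) = s^q * s^(3*q)" by (simp flip: power_add)
          then show ?thesis using s0 by simp
        qed
        finally show ?thesis using B0 by simp
      next
        case False
        have "d^q * s^q \<le> d^q * d^q" using False d0 s0 by (intro mult_left_mono power_mono) auto
        moreover have "d^(2*q) = d^q * d^q" by (simp add: mult_2 power_add)
        ultimately have "d^q \<le> d^(2*q) / s^q" using s0 by (simp add: pos_le_divide_eq)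
        then have "2^q * d^q / s^(4*q) \<le> 2^q * (d^(2*q) / s^q) / s^(4*q)"
          using s0 by (intro divide_right_mono mult_left_mono) auto
        also have "\<dots> = ?B"
        proof -
          have "s^(5*q) = s^q * s^(4*q)" by (simp flip: power_add)
          then show ?thesis unfolding d_def using s0 by simp
        qed
        finally show ?thesis using A0 by simp
      qed
      finally show ?thesis using D0 by simp
    next
      case small: False
      have a: "\<bar>1 / x - 1 / mu\<bar> \<le> K"
      proof -
        have "1 / x \<le> 1" "1/x \<ge> 0" using x1 by auto
        moreover have "1 / mu \<le> 1 / c" "1/mu \<ge> 0" using c muc by (auto simp: frac_le)
        moreover have "1 \<le> K" "1/c \<le> K" unfolding K by auto
        ultimately show ?thesis unfolding abs_le_iff by (intro conjI; linarith)
      qed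
      have dm: "d \<ge> mu / 2" unfolding d_def using small by (simp add: abs_if)
      have "1 \<le> (2 * d / mu)" using dm mu0 by (simp add: field_simps)
      then have one: "1 \<le> (2 * d / mu) ^ (4*q)" by (rule one_le_power)
      have "?f \<le> K ^ q" using f a by (meson abs_ge_zero order.trans power_mono)
      also have "\<dots> \<le> K^q * (2 * d / mu) ^ (4*q)" using one K by (simp add: mult_le_cancel_left1)
      also have "\<dots> = ?D"
      proof -
        have "(2 * d / mu) ^ (4*q) = 2^(4*q) * d^(4*q) / (s^2)^(4*q)"
          unfolding mus by (simp add: power_divide power_mult_distrib)
        also have "\<dots> = 16^q * d^(4*q) / s^(8*q)"
          by (simp add: power_mult flip: power_mult[of _ 2 "4*q"])
        finally show ?thesis unfolding d_def by simp
      qed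
      finally show ?thesis using A0 B0 by simp
    qed
  qed
qed


lemma powr_conv:
  assumes "mu > 0"
  shows "mu powr (- 3 * real q / 2) = 1 / sqrt mu ^ (3*q)"
proof -
  have "mu = sqrt mu powr 2" using assms by (simp add: powr_half_sqrt[symmetric] powr_powr)
  then have "mu powr (- 3 * real q / 2) = sqrt mu powr (2 * (- 3 * real q / 2))"
    by (metis powr_powr)
  also have "\<dots> = sqrt mu powr (- real (3*q))" by simp
  also have "\<dots> = 1 / sqrt mu powr real (3*q)" by (rule powr_minus_divide)
  also have "sqrt mu powr real (3*q) = sqrt mu ^ (3*q)" by (rule powr_realpow) (use assms in simp)
  finally show ?thesis .
qed

theorem lemma1:
  fixes q :: nat and c :: real
  assumes "q > 1" and "c > 0"
  shows "\<exists>C > 0. \<forall>(n::nat) (p::real). 0 < p \<longrightarrow> p < 1 \<longrightarrow> real n * p \<ge> c \<longrightarrow>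
           measure_pmf.expectation (binomial_pmf n p)
             (\<lambda>k. if k > 0 then (1 / real k - 1 / (real n * p)) ^ q else 0)
           \<le> C * (real n * p) powr (- 3 * real q / 2)"
proof -
  note c = \<open>c > 0\<close>
  obtain C2 where C2: "\<And>n p. p \<in> {0..1} \<Longrightarrow> \<bar>mom (2*q) n p\<bar> \<le> C2 * (1 + real n * p)^((2*q) div 2)"
    using mom_bound by blast
  obtain C4 where C4: "\<And>n p. p \<in> {0..1} \<Longrightarrow> \<bar>mom (4*q) n p\<bar> \<le> C4 * (1 + real n * p)^((4*q) div 2)"
    using mom_bound by blast
  define K where "K = max 1 (1/c)"
  define L where "L = 1 + 1/c"
  have K0: "K \<ge> 0" and L0: "L \<ge> 0" unfolding K_def L_def using c by auto
  define Cf where "Cf = 2^q + 2^q*\<bar>C2\<bar>*L^q + K^q*16^q*\<bar>C4\<bar>*L^(2*q) / sqrt c ^ q"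
  have Cpos: "Cf > 0"
  proof -
    have "2^q*\<bar>C2\<bar>*L^q \<ge> 0" using L0 by simp
    moreover have "K^q*16^q*\<bar>C4\<bar>*L^(2*q) / sqrt c ^ q \<ge> 0" using L0 K0 c by simp
    ultimately show ?thesis unfolding Cf_def by (simp add: add_pos_nonneg)
  qed
  show ?thesis
  proof (intro exI[of _ Cf] conjI allI impI Cpos)
    fix n :: nat and p :: real
    assume p0: "0 < p" and p1: "p < 1" and mc: "c \<le> real n * p"
    define mu where "mu = real n * p"
    define s where "s = sqrt mu"
    have mu0: "mu > 0" using mc c unfolding mu_def by simp
    have s0: "s > 0" using mu0 unfolding s_def by simp
    have mus: "mu = s^2" using mu0 unfolding s_def by simp
    have pp: "p \<in> {0..1}" using p0 p1 by simp
    have muc: "c \<le> mu" using mc unfolding mu_def .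
    define g where "g = (\<lambda>k::nat. 2^q / s^(3*q) + 2^q * (real k - mu)^(2*q) / s^(5*q)
         + K^q * 16^q * (real k - mu)^(4*q) / s^(8*q))"
    have "measure_pmf.expectation (binomial_pmf n p)
             (\<lambda>k. if k > 0 then (1 / real k - 1 / (real n * p)) ^ q else 0)
          \<le> measure_pmf.expectation (binomial_pmf n p) g"
    proof (rule integral_mono)
      fix k :: nat
      have "(if k > 0 then (1 / real k - 1 / mu) ^ q else 0) \<le> 2^q / s^(3*q) + 2^q * \<bar>real k - mu\<bar>^(2*q) / s^(5*q) + K^q * 16^q * \<bar>real k - mu\<bar>^(4*q) / s^(8*q)"
        by (rule pointwise[OF c muc s_def K_def refl])
      also have "\<dots> = g k" unfolding g_def
        by (simp add: power_even_abs)
      finally show "(if k > 0 then (1 / real k - 1 / (real n * p)) ^ q else 0) \<le> g k"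
        unfolding mu_def .
    qed (use pp in auto)
    also have "measure_pmf.expectation (binomial_pmf n p) g
        = 2^q / s^(3*q) + 2^q * mom (2*q) n p / s^(5*q) + K^q * 16^q * mom (4*q) n p / s^(8*q)"
      unfolding g_def mom_def mu_def using pp by simp
    also have "\<dots> \<le> 2^q / s^(3*q) + 2^q * (\<bar>C2\<bar> * L^q * s^(2*q)) / s^(5*q)
          + K^q * 16^q * (\<bar>C4\<bar> * L^(2*q) * s^(4*q)) / s^(8*q)"
    proof -
      have lm: "1 + mu \<le> L * s^2"
      proof -
        have "1 \<le> mu / c" using muc c by simp
        then show ?thesis unfolding L_def mus[symmetric] by (simp add: algebra_simps)
      qed
      have "mom (2*q) n p \<le> C2 * (1 + mu)^q"
        using C2[OF pp, of n] unfolding mu_def by simp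
      also have "\<dots> \<le> \<bar>C2\<bar> * (L * s^2)^q"
        by (intro mult_mono power_mono lm) (use mu0 in auto)
      also have "\<dots> = \<bar>C2\<bar> * L^q * s^(2*q)" by (simp add: power_mult_distrib power_mult)
      finally have m2: "mom (2*q) n p \<le> \<bar>C2\<bar> * L^q * s^(2*q)" .
      have "mom (4*q) n p \<le> C4 * (1 + mu)^(2*q)"
        using C4[OF pp, of n] unfolding mu_def by simp
      also have "\<dots> \<le> \<bar>C4\<bar> * (L * s^2)^(2*q)"
        by (intro mult_mono power_mono lm) (use mu0 in auto)
      also have "\<dots> = \<bar>C4\<bar> * L^(2*q) * s^(4*q)" by (simp add: power_mult_distrib flip: power_mult)
      finally have m4: "mom (4*q) n p \<le> \<bar>C4\<bar> * L^(2*q) * s^(4*q)" .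
      show ?thesis
        using m2 m4 s0 K0
        by (intro add_mono divide_right_mono mult_left_mono order.refl) auto
    qed
    also have "\<dots> = (2^q + 2^q*\<bar>C2\<bar>*L^q + K^q*16^q*\<bar>C4\<bar>*L^(2*q) / s^q) / s^(3*q)"
    proof -
      have e5: "s^(5*q) = s^(2*q) * s^(3*q)" by (simp flip: power_add)
      have e8: "s^(8*q) = s^(4*q) * (s^q * s^(3*q))" by (simp flip: power_add)
      show ?thesis unfolding e5 e8 using s0 by (simp add: field_simps)
    qed
    also have "\<dots> \<le> Cf / s^(3*q)"
    proof -
      have "sqrt c \<le> s" unfolding s_def using muc by simp
      then have "sqrt c ^ q \<le> s ^ q" using c by (intro power_mono) auto
      then have "1 / s^q \<le> 1 / sqrt c ^ q" using c s0 by (intro divide_left_mono) auto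
      then have "K^q*16^q*\<bar>C4\<bar>*L^(2*q) * (1 / s^q) \<le> K^q*16^q*\<bar>C4\<bar>*L^(2*q) * (1 / sqrt c ^ q)"
        using K0 L0 by (intro mult_left_mono) auto
      then show ?thesis unfolding Cf_def using s0 by (intro divide_right_mono) auto
    qed
    also have "\<dots> = Cf * (real n * p) powr (- 3 * real q / 2)"
      using powr_conv[OF mu0, of q] unfolding s_def mu_def by simp
    finally show "measure_pmf.expectation (binomial_pmf n p)
             (\<lambda>k. if k > 0 then (1 / real k - 1 / (real n * p)) ^ q else 0)
           \<le> Cf * (real n * p) powr (- 3 * real q / 2)" .
  qed
qed

end
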